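(* Let $k\ge1$ be an odd integer and let $a$ be a positive integer. Then $$\binom{2ka-1}{2k-1}\equiv(-1)^{a+1}\binom{ka-1}{k-1}\pmod 4.$$ *)

theory Defs
  imports "HOL-Number_Theory.Number_Theory"
begin

end

theory Submission
  imports Defs
begin

lemma rec1: "Suc k * (n choose Suc k) = (n - k) * (n choose k)"
  using binomial_absorption[of k n] binomial_absorb_comp[of n k] by simp

lemma key_id:
  assumes "n \<ge> 1"
  shows "((2*n-1) choose (2*m+1)) * (\<Prod>i<Suc m. 2*i+1) =
         ((n-1) choose m) * (\<Prod>i<Suc m. 2*n-2*i-1)"
proof (induction m)
  case 0
  then show ?case by simp
next
  case (Suc m)
  define M where "M = 2*n-1"
  define A where "A = (M choose (2*m+1))"
  define A' where "A' = (M choose (2*m+3))"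
  define B where "B = ((n-1) choose m)"
  define B' where "B' = ((n-1) choose Suc m)"
  define D where "D = (\<Prod>i<Suc m. 2*i+1::nat)"
  define N where "N = (\<Prod>i<Suc m. 2*n-2*i-1::nat)"
  have IH: "A * D = B * N" using Suc.IH unfolding A_def B_def D_def N_def M_def .
  have r1: "(2*m+2) * (M choose (2*m+2)) = (M-2*m-1) * A"
    using rec1[of "2*m+1" M] unfolding A_def by (simp add: numeral_eq_Suc)
  have r2: "(2*m+3) * A' = (M-2*m-2) * (M choose (2*m+2))"
    using rec1[of "2*m+2" M] unfolding A'_def by (simp add: numeral_eq_Suc)
  have r3: "(m+1) * B' = (n-1-m) * B"
    using rec1[of m "n-1"] unfolding B_def B'_def by simp
  have e1: "M-2*m-1 = 2*(n-1-m)" using assms unfolding M_def by simp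
  have e2: "M-2*m-2 = 2*n-2*(Suc m)-1" using assms unfolding M_def by simp
  have r3': "(2*m+2)*B' = 2*(n-1-m)*B"
  proof -
    have "2*((m+1)*B') = 2*((n-1-m)*B)" using r3 by simp
    then show ?thesis by (simp add: algebra_simps)
  qed
  have "(2*m+2) * (A' * ((2*m+3) * D)) = (M-2*m-2) * ((2*m+2) * (M choose (2*m+2))) * D"
    using r2 by (metis mult.assoc mult.left_commute)
  also have "\<dots> = (M-2*m-2) * (M-2*m-1) * (A * D)"
    using r1 by (simp add: ac_simps)
  also have "\<dots> = (M-2*m-2) * (2*(n-1-m)) * (B * N)" using IH e1 by simp
  also have "\<dots> = ((2*m+2)*B') * (N*(M-2*m-2))"
    by (simp only: r3') (simp add: ac_simps)
  also have "\<dots> = (2*m+2) * (B' * (N * (M-2*m-2)))"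
    by (rule mult.assoc)
  finally have F: "A' * ((2*m+3) * D) = B' * (N * (M-2*m-2))"
    by (rule mult_left_cancel[THEN iffD1, rotated]) simp
  have P1: "(\<Prod>i<Suc (Suc m). 2*i+1::nat) = (2*m+3) * D"
  proof -
    have "(\<Prod>i<Suc (Suc m). 2*i+1::nat) = D * (2*Suc m+1)"
      unfolding D_def by (rule prod.lessThan_Suc)
    moreover have "2*Suc m+1 = 2*m+(3::nat)" by simp
    ultimately show ?thesis by (metis mult.commute)
  qed
  have P2: "(\<Prod>i<Suc (Suc m). 2*n-2*i-1::nat) = N * (M-2*m-2)"
  proof -
    have "(\<Prod>i<Suc (Suc m). 2*n-2*i-1::nat) = N * (2*n-2*Suc m-1)"
      unfolding N_def by (rule prod.lessThan_Suc)
    then show ?thesis using e2 by metis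
  qed
  have h: "2*Suc m + 1 = 2*m+3" by simp
  show ?case unfolding M_def[symmetric] B'_def[symmetric] P1 P2 h A'_def[symmetric]
    by (rule F)
qed

theorem lemma3p2:
  fixes k a :: nat
  assumes "k \<ge> 1" and "odd k" and "a \<ge> 1"
  shows "[int ((2*k*a - 1) choose (2*k - 1)) = (-1) ^ (a + 1) * int ((k*a - 1) choose (k - 1))] (mod 4)"
proof -
  define s :: int where "s = (-1) ^ (a + 1)"
  define D where "D = (\<Prod>i<k. 2*i+1::nat)"
  define N where "N = (\<Prod>i<k. 2*(k*a)-2*i-1::nat)"
  obtain m where km: "k = Suc m" using assms(1) by (cases k) auto
  have n1: "k*a \<ge> 1" using assms by simp
  have id: "((2*k*a - 1) choose (2*k - 1)) * D = ((k*a - 1) choose (k - 1)) * N"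
  proof -
    have e: "2*k*a = 2*(k*a)" "2*k-1 = 2*m+1" "k-1=m" "Suc m = k" using km by auto
    show ?thesis unfolding D_def N_def e(1-3) using key_id[OF n1, of m] unfolding e(4) .
  qed
  have fac: "[int (2*(k*a)-2*i-1) = s * int (2*i+1)] (mod 4)" if "i < k" for i
  proof -
    have "k \<le> k*a" using assms(3) by simp
    then have le: "2*i+1 \<le> 2*(k*a)" using that by linarith
    have "2*(k*a)-2*i-1 + (2*i+1) = 2*(k*a)" using le by simp
    then have "int (2*(k*a)-2*i-1 + (2*i+1)) = int (2*(k*a))" by (rule arg_cong)
    then have "int (2*(k*a)-2*i-1) + (2*int i+1) = 2*(int k*int a)" by simp
    then have eq: "int (2*(k*a)-2*i-1) = 2*(int k*int a) - 2*int i - 1" by linarith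
    show ?thesis
    proof (cases "even a")
      case True
      then obtain b where b: "a = 2*b" by (rule evenE)
      have ia: "int a = 2 * int b" using b by simp
      have "s = -1" using True by (simp add: s_def)
      then have "int (2*(k*a)-2*i-1) - s * int (2*i+1) = 4 * (int k * int b)"
        unfolding eq ia by (simp add: algebra_simps)
      then show ?thesis unfolding cong_iff_dvd_diff by simp
    next
      case False
      then obtain b where b: "a = 2*b+1" by (rule oddE)
      obtain c where c: "k = 2*c+1" using assms(2) by (rule oddE)
      have ia: "int a = 2 * int b + 1" using b by simp
      have ik: "int k = 2 * int c + 1" using c by simp
      have "s = 1" using False by (simp add: s_def)
      then have "int (2*(k*a)-2*i-1) - s * int (2*i+1) = 4 * (2*int c*int b + int c + int b - int i)"
        unfolding eq ia ik by (simp add: algebra_simps)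
      then show ?thesis unfolding cong_iff_dvd_diff by simp
    qed
  qed
  have "[int N = (\<Prod>i<k. s * int (2*i+1))] (mod 4)"
    unfolding N_def of_nat_prod by (rule cong_prod) (use fac in auto)
  moreover have "(\<Prod>i<k. s * int (2*i+1)) = s ^ k * int D"
    unfolding D_def by (simp add: prod.distrib)
  moreover have "s ^ k = s"
  proof -
    have "s = 1 \<or> s = -1" unfolding s_def by (simp add: minus_one_power_iff)
    then show ?thesis using assms(2) by (auto simp add: minus_one_power_iff)
  qed
  ultimately have cN: "[int N = s * int D] (mod 4)" by (simp only:)
  have eqi: "int ((2*k*a - 1) choose (2*k - 1)) * int D = int ((k*a - 1) choose (k - 1)) * int N"
    using arg_cong[OF id, of int] by (simp only: of_nat_mult)
  have c2: "[int ((2*k*a - 1) choose (2*k - 1)) * int D = int ((k*a - 1) choose (k - 1)) * (s * int D)] (mod 4)"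
    unfolding eqi by (rule cong_scalar_left[OF cN])
  have re: "int ((k*a - 1) choose (k - 1)) * (s * int D) = (s * int ((k*a - 1) choose (k - 1))) * int D"
    by (simp only: ac_simps)
  have "[int ((2*k*a - 1) choose (2*k - 1)) * int D = (s * int ((k*a - 1) choose (k - 1))) * int D] (mod 4)"
    using c2 unfolding re .
  note fin = this
  have cop: "coprime (int D) 4"
  proof -
    have "odd D" unfolding D_def by (simp add: even_prod_iff)
    then have "odd (int D)" by simp
    then have "coprime (int D) 2" by (rule coprime_right_2_iff_odd[THEN iffD2])
    then have c: "coprime (int D) (2^2)" by (metis coprime_power_right_iff)
    have e4: "(2::int)^2 = 4" by simp
    show ?thesis using c unfolding e4 .
  qed
  show ?thesis using fin unfolding s_def cong_mult_rcancel[OF cop] .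
qed

end
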